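(* For $n\ge 0$ let $h_n$ denote the number of matching coalescent histories of the lodgepole species tree $\lambda_n$ (for $n\ge 1$), with the convention $h_0=1$. Then for all $n\ge 1$, $$h_n=(2n+1)!!-\sum_{k=0}^{n-1}(2k+1)!!\,h_{n-1-k}.$$ Moreover, for all $n\ge 1$, $$(2n+1)!!\left(\frac{n-2}{n}\right)\le h_n\le (2n+1)!!,$$ and asymptotically, as $n\to\infty$, $$h_n\sim(2n+1)!!\sim\sqrt{2}\left[\frac{2(n+1)}{e}\right]^{n+1}.$$
   Context: A species tree is a rooted binary tree whose leaves carry distinct labels. Each node $v$ of a tree $t$ has a branch directly above it: for a non-root node this is the edge joining $v$ to its parent, and the root additionally has a root branch above it. A leaf $x$ descends from a branch if $x$ lies in the subtree below that branch (i.e. below the node at the lower end of the branch, including that node). A branch $b'$ is descended from a branch $b$ if the node at the lower end of $b'$ lies in the subtree below $b$. Given a species tree $t$, a matching coalescent history of $t$ is a map $h$ from the set of internal nodes of $t$ to the set of branches of $t$ such that: (a) for every leaf $x$ and every internal node $k$, if $x$ descends from $k$ in $t$ then $x$ descends from the branch $h(k)$; (b) for all internal nodes $k_1,k_2$, if $k_2$ is a descendant of $k_1$ then the branch $h(k_2)$ is descended from or coincides with the branch $h(k_1)$. The lodgepole family $(\lambda_n)_{n\ge0}$ is defined by: $\lambda_0$ is the tree with one leaf, and for $n\ge 0$, $\lambda_{n+1}$ is obtained by attaching $\lambda_n$ and a cherry (a tree with exactly two leaves) as the two child subtrees of a new common root. Thus $\lambda_n$ has $2n+1$ leaves (labeled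 arbitrarily). Here $(2n+1)!!=(2n+1)(2n-1)\cdots 3\cdot 1$, and $a_n\sim b_n$ means $a_n/b_n\to1$. *)

theory Defs
  imports Complex_Main "HOL-Library.Landau_Symbols" "HOL-Library.FuncSet" "HOL-Library.Sublist"
begin

text \<open>Tree shapes (rooted binary trees); a node is identified by its position,
the path from the root (False = left child, True = right child).
The branch above node v is identified with v (the root branch with the root).\<close>

datatype tree = Leaf | Node tree tree

fun nodes :: "tree \<Rightarrow> bool list set" where
  "nodes Leaf = {[]}"
| "nodes (Node l r) = insert [] ((\<lambda>p. False # p) ` nodes l \<union> (\<lambda>p. True # p) ` nodes r)"

fun internal_nodes :: "tree \<Rightarrow> bool list set" where
  "internal_nodes Leaf = {}"
| "internal_nodes (Node l r) =
     insert [] ((\<lambda>p. False # p) ` internal_nodes l \<union> (\<lambda>p. True # p) ` internal_nodes r)"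

definition leaves :: "tree \<Rightarrow> bool list set" where
  "leaves t = nodes t - internal_nodes t"

text \<open>Node (or branch) p lies in the subtree below node (branch) q iff q is a prefix of p.\<close>

definition is_mch :: "tree \<Rightarrow> (bool list \<Rightarrow> bool list) \<Rightarrow> bool" where
  "is_mch t h \<longleftrightarrow>
     (\<forall>x\<in>leaves t. \<forall>k\<in>internal_nodes t. prefix k x \<longrightarrow> prefix (h k) x) \<and>
     (\<forall>k1\<in>internal_nodes t. \<forall>k2\<in>internal_nodes t. prefix k1 k2 \<longrightarrow> prefix (h k1) (h k2))"

definition matching_histories :: "tree \<Rightarrow> (bool list \<Rightarrow> bool list) set" where
  "matching_histories t = {h \<in> internal_nodes t \<rightarrow>\<^sub>E nodes t. is_mch t h}"

definition cherry :: tree where "cherry = Node Leaf Leaf"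

fun lodgepole :: "nat \<Rightarrow> tree" where
  "lodgepole 0 = Leaf"
| "lodgepole (Suc n) = Node (lodgepole n) cherry"

definition hcount :: "nat \<Rightarrow> nat" where
  "hcount n = (if n = 0 then 1 else card (matching_histories (lodgepole n)))"

fun dfact :: "nat \<Rightarrow> nat" where
  "dfact 0 = 1"
| "dfact (Suc 0) = 1"
| "dfact (Suc (Suc n)) = Suc (Suc n) * dfact n"

end

theory Submission
  imports Defs
begin


fun HH :: "nat \<Rightarrow> nat \<Rightarrow> nat" where
  "HH 0 m = 1"
| "HH (Suc n) m = (\<Sum>j\<le>m. (j+2) * HH n (j+1))"

fun EE :: "nat \<Rightarrow> nat \<Rightarrow> nat" where
  "EE 0 m = 1"
| "EE (Suc n) m = EE n 0 + (\<Sum>j\<le>m. (j+2) * EE n (j+1))"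

fun oo :: "nat \<Rightarrow> nat" where
  "oo 0 = 1"
| "oo (Suc n) = (2*n+1) * oo n"

lemma EE_decomp: "EE n m = HH n m + (\<Sum>j<n. HH j m * EE (n-1-j) 0)"
proof (induction n arbitrary: m)
  case 0 then show ?case by simp
next
  case (Suc n)
  have "EE (Suc n) m = EE n 0 + (\<Sum>j\<le>m. (j+2) * (HH n (j+1) + (\<Sum>i<n. HH i (j+1) * EE (n-1-i) 0)))"
    using Suc by simp
  also have "\<dots> = EE n 0 + HH (Suc n) m + (\<Sum>i<n. (\<Sum>j\<le>m. (j+2) * HH i (j+1)) * EE (n-1-i) 0)"
    by (simp add: algebra_simps sum.distrib sum_distrib_left sum_distrib_right sum.swap[of _ "{..<n}"])
  also have "\<dots> = EE n 0 + HH (Suc n) m + (\<Sum>i<n. HH (Suc i) m * EE (n-1-i) 0)"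
    by simp
  also have "\<dots> = HH (Suc n) m + (HH 0 m * EE (Suc n - 1 - 0) 0 + (\<Sum>i<n. HH (Suc i) m * EE (Suc n-1-Suc i) 0))"
    by (simp del: HH.simps EE.simps add: HH.simps(1))
  also have "\<dots> = HH (Suc n) m + (\<Sum>j<Suc n. HH j m * EE (Suc n-1-j) 0)"
    by (simp only: sum.lessThan_Suc_shift)
  finally show ?case .
qed

lemma choose_gen: "(k+1) * (Suc n choose (k+1)) = (Suc n - k) * (Suc n choose k)"
  using binomial_absorb_comp[of "Suc n" k] Suc_times_binomial[of k n] by simp

lemma choose_shift: "(m+3) * ((m+3+N) choose N) = (N+1) * ((m+3+N) choose (N+1))"
  using choose_gen[of N "m+2+N"] by (simp add: numeral_eq_Suc)

lemma sum_id: "(N+1) + (\<Sum>j\<le>m. (j+2) * ((j+2+N) choose N)) = (N+1) * ((m+3+N) choose (N+2))"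
proof (induction m)
  case 0
  have "(N+2 choose N) = (N+2 choose 2)" using binomial_symmetric[of N "N+2"] by simp
  then have "2 * (N+2 choose N) = (N+2)*(N+1)" by (simp add: choose_two)
  moreover have "(N+3 choose (N+2)) = N+3" using binomial_symmetric[of "N+2" "N+3"] by simp
  ultimately show ?case by (simp add: algebra_simps)
next
  case (Suc m)
  have "(N+1) + (\<Sum>j\<le>Suc m. (j+2) * ((j+2+N) choose N)) = ((N+1) + (\<Sum>j\<le>m. (j+2) * ((j+2+N) choose N))) + (Suc m+2) * ((Suc m+2+N) choose N)"
    by simp
  also have "\<dots> = (N+1) * ((m+3+N) choose (N+2)) + (m+3) * ((m+3+N) choose N)"
  proof -
    have e: "Suc m + 2 = m + 3" by simp
    show ?thesis using Suc.IH by (simp only: e)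
  qed
  also have "\<dots> = (N+1) * ((m+3+N) choose (N+2)) + (N+1) * ((m+3+N) choose (N+1))"
    by (simp only: choose_shift)
  also have "\<dots> = (N+1) * (((m+3+N) choose (N+2)) + ((m+3+N) choose (N+1)))"
    by (simp add: algebra_simps)
  also have "((m+3+N) choose (N+2)) + ((m+3+N) choose (N+1)) = ((Suc m+3+N) choose (N+2))"
    by (simp add: numeral_eq_Suc)
  finally show ?case .
qed

lemma EE_closed: "EE n m = ((m+1+2*n) choose (2*n)) * oo n"
proof (induction n arbitrary: m)
  case 0 then show ?case by simp
next
  case (Suc n)
  have "EE (Suc n) m = EE n 0 + (\<Sum>j\<le>m. (j+2) * EE n (j+1))" by simp
  also have "\<dots> = (2*n+1) * oo n + (\<Sum>j\<le>m. (j+2) * (((j+2+2*n) choose (2*n)) * oo n))"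
    using Suc by (simp add: add.commute add.left_commute)
  also have "(\<Sum>j\<le>m. (j+2) * (((j+2+2*n) choose (2*n)) * oo n)) = (\<Sum>j\<le>m. (j+2) * ((j+2+2*n) choose (2*n))) * oo n"
    unfolding sum_distrib_right by (simp only: mult.assoc)
  also have "(2*n+1) * oo n + (\<Sum>j\<le>m. (j+2) * ((j+2+2*n) choose (2*n))) * oo n
     = ((2*n+1) + (\<Sum>j\<le>m. (j+2) * ((j+2+2*n) choose (2*n)))) * oo n"
    by (simp add: algebra_simps)
  also have "\<dots> = (2*n+1) * ((m+3+2*n) choose (2*n+2)) * oo n"
    using sum_id[of "2*n" m] by simp
  also have "\<dots> = ((m+3+2*n) choose (2*n+2)) * ((2*n+1) * oo n)" by (simp only: mult_ac)
  also have "\<dots> = ((m+1+2*Suc n) choose (2*Suc n)) * oo (Suc n)"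
  proof -
    have e1: "m+1+(2*n+2) = m+3+2*n" and e2: "2*Suc n = 2*n+2" by simp_all
    show ?thesis by (simp only: oo.simps e2 e1)
  qed
  finally show ?case .
qed

lemma dfact_oo: "dfact (2*n+1) = oo (Suc n)"
proof (induction n)
  case 0 then show ?case by simp
next
  case (Suc n)
  have "dfact (2*Suc n+1) = dfact (Suc (Suc (2*n+1)))" by simp
  also have "\<dots> = (2*n+3) * dfact (2*n+1)" by (simp only: dfact.simps) (simp add: algebra_simps)
  finally show ?case using Suc by (simp add: algebra_simps)
qed

lemma EE0: "EE n 0 = dfact (2*n+1)"
  by (simp only: EE_closed dfact_oo) simp



lemma prefix_drop_mono: "prefix a b \<Longrightarrow> prefix (drop i a) (drop i b)"
proof -
  assume "prefix a b"
  then obtain c where "b = a @ c" by (auto simp: prefix_def)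
  then show ?thesis by (simp add: drop_append)
qed

lemma int_sub_nodes: "k \<in> internal_nodes t \<Longrightarrow> k \<in> nodes t"
  by (induction t arbitrary: k) auto

lemma int_child: "k \<in> internal_nodes t \<Longrightarrow> k @ [b] \<in> nodes t"
proof (induction t arbitrary: k)
  case Leaf then show ?case by simp
next
  case (Node l r)
  show ?case
  proof (cases "k = []")
    case True
    have "[] \<in> nodes l" "[] \<in> nodes r" by (cases l; simp) (cases r; simp)
    then show ?thesis using True by (cases b) auto
  next
    case False
    then have "k \<in> (#) False ` internal_nodes l \<union> (#) True ` internal_nodes r" using Node.prems by simp
    then show ?thesis using Node.IH by auto
  qed
qed

lemma nodes_prefix_closed: "x \<in> nodes t \<Longrightarrow> prefix y x \<Longrightarrow> y \<in> nodes t"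
proof (induction t arbitrary: x y)
  case Leaf then show ?case by simp
next
  case (Node l r)
  show ?case
  proof (cases y)
    case Nil then show ?thesis by simp
  next
    case (Cons b y')
    then obtain x' where x: "x = b # x'" "prefix y' x'" using Node.prems(2) by (cases x) auto
    show ?thesis
    proof (cases b)
      case True
      then have "x' \<in> nodes r" using Node.prems(1) x by auto
      then show ?thesis using Node.IH(2) x Cons True by auto
    next
      case False
      then have "x' \<in> nodes l" using Node.prems(1) x by auto
      then show ?thesis using Node.IH(1) x Cons False by auto
    qed
  qed
qed

lemma node_leaf: "x \<in> nodes t \<Longrightarrow> \<exists>y\<in>leaves t. prefix x y"
proof (induction t arbitrary: x)
  case Leaf then show ?case by (simp add: leaves_def)
next
  case (Node l r)
  have "[] \<in> nodes l" by (cases l) auto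
  then obtain y where y: "y \<in> leaves l" using Node.IH(1) by blast
  show ?case
  proof (cases x)
    case Nil
    then show ?thesis using y by (intro bexI[of _ "False # y"]) (auto simp: leaves_def)
  next
    case (Cons b x')
    show ?thesis
    proof (cases b)
      case True
      then have "x' \<in> nodes r" using Node.prems Cons by auto
      then obtain z where "z \<in> leaves r" "prefix x' z" using Node.IH(2) by blast
      then show ?thesis using Cons True by (intro bexI[of _ "True # z"]) (auto simp: leaves_def)
    next
      case False
      then have "x' \<in> nodes l" using Node.prems Cons by auto
      then obtain z where "z \<in> leaves l" "prefix x' z" using Node.IH(1) by blast
      then show ?thesis using Cons False by (intro bexI[of _ "False # z"]) (auto simp: leaves_def)
    qed
  qed
qed

lemma leaf_cond_iff:
  assumes k: "k \<in> internal_nodes t"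
  shows "(\<forall>x\<in>leaves t. prefix k x \<longrightarrow> prefix q x) \<longleftrightarrow> prefix q k"
proof
  assume a: "\<forall>x\<in>leaves t. prefix k x \<longrightarrow> prefix q x"
  obtain y1 where y1: "y1 \<in> leaves t" "prefix (k@[False]) y1" using node_leaf int_child[OF k] by blast
  obtain y2 where y2: "y2 \<in> leaves t" "prefix (k@[True]) y2" using node_leaf int_child[OF k] by blast
  have q1: "prefix q y1" using a y1 by (meson prefix_order.trans prefixI)
  have q2: "prefix q y2" using a y2 by (meson prefix_order.trans prefixI)
  have c1: "prefix q (k@[False]) \<or> prefix (k@[False]) q" using q1 y1(2) prefix_same_cases by blast
  have c2: "prefix q (k@[True]) \<or> prefix (k@[True]) q" using q2 y2(2) prefix_same_cases by blast
  show "prefix q k"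
  proof (rule ccontr)
    assume nq: "\<not> prefix q k"
    have "prefix (k@[False]) q"
      using c1 nq by (auto simp: prefix_snoc)
    moreover have "prefix (k@[True]) q"
      using c2 nq by (auto simp: prefix_snoc)
    ultimately have "prefix (k@[False]) (k@[True]) \<or> prefix (k@[True]) (k@[False])"
      using prefix_same_cases by blast
    then show False by simp
  qed
next
  assume "prefix q k"
  then show "\<forall>x\<in>leaves t. prefix k x \<longrightarrow> prefix q x" by (meson prefix_order.trans)
qed

lemma mh_char:
  "matching_histories t = {h \<in> internal_nodes t \<rightarrow>\<^sub>E UNIV. (\<forall>k\<in>internal_nodes t. prefix (h k) k) \<and>
      (\<forall>k1\<in>internal_nodes t. \<forall>k2\<in>internal_nodes t. prefix k1 k2 \<longrightarrow> prefix (h k1) (h k2))}"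
proof -
  have key: "(h \<in> internal_nodes t \<rightarrow>\<^sub>E nodes t \<and> (\<forall>x\<in>leaves t. \<forall>k\<in>internal_nodes t. prefix k x \<longrightarrow> prefix (h k) x))
     \<longleftrightarrow> (h \<in> internal_nodes t \<rightarrow>\<^sub>E UNIV \<and> (\<forall>k\<in>internal_nodes t. prefix (h k) k))" for h
  proof
    assume a: "h \<in> internal_nodes t \<rightarrow>\<^sub>E nodes t \<and> (\<forall>x\<in>leaves t. \<forall>k\<in>internal_nodes t. prefix k x \<longrightarrow> prefix (h k) x)"
    have "\<forall>k\<in>internal_nodes t. prefix (h k) k"
    proof
      fix k assume k: "k \<in> internal_nodes t"
      then show "prefix (h k) k" using a leaf_cond_iff[OF k, of "h k"] by blast
    qed
    then show "h \<in> internal_nodes t \<rightarrow>\<^sub>E UNIV \<and> (\<forall>k\<in>internal_nodes t. prefix (h k) k)"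
      using a by (auto simp: PiE_def)
  next
    assume a: "h \<in> internal_nodes t \<rightarrow>\<^sub>E UNIV \<and> (\<forall>k\<in>internal_nodes t. prefix (h k) k)"
    have "\<forall>k\<in>internal_nodes t. h k \<in> nodes t" using a int_sub_nodes nodes_prefix_closed by blast
    then have "h \<in> internal_nodes t \<rightarrow>\<^sub>E nodes t"
      using a by (auto simp: PiE_def Pi_def)
    moreover have "\<forall>x\<in>leaves t. \<forall>k\<in>internal_nodes t. prefix k x \<longrightarrow> prefix (h k) x"
      using a by (meson prefix_order.trans)
    ultimately show "h \<in> internal_nodes t \<rightarrow>\<^sub>E nodes t \<and> (\<forall>x\<in>leaves t. \<forall>k\<in>internal_nodes t. prefix k x \<longrightarrow> prefix (h k) x)"
      by blast
  qed
  show ?thesis unfolding matching_histories_def is_mch_def using key by blast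
qed



declare prefix_snoc[simp del]

definition AA :: "nat \<Rightarrow> bool list \<Rightarrow> (bool list \<Rightarrow> bool list) set" where
  "AA n p = {h \<in> internal_nodes (lodgepole n) \<rightarrow>\<^sub>E UNIV.
     (\<forall>k\<in>internal_nodes (lodgepole n). prefix (h k) (p @ k)) \<and>
     (\<forall>k1\<in>internal_nodes (lodgepole n). \<forall>k2\<in>internal_nodes (lodgepole n). prefix k1 k2 \<longrightarrow> prefix (h k1) (h k2))}"

lemma int_lodge_Suc: "internal_nodes (lodgepole (Suc n)) = insert [] (insert [True] ((#) False ` internal_nodes (lodgepole n)))"
  by (auto simp: cherry_def)

definition CC :: "bool list \<Rightarrow> nat \<Rightarrow> bool list set" where
  "CC p i = {c. prefix (take i p) c \<and> prefix c (p @ [True])}"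

lemma CC_eq: "i \<le> length p \<Longrightarrow> CC p i = (\<lambda>s. take i p @ s) ` {s. prefix s (drop i p @ [True])}"
proof (intro set_eqI iffI)
  fix c assume i: "i \<le> length p" and c: "c \<in> CC p i"
  then obtain s where s: "c = take i p @ s" by (auto simp: CC_def prefix_def)
  have e: "p @ [True] = take i p @ (drop i p @ [True])" by simp
  have "prefix c (p @ [True])" using c unfolding CC_def by blast
  then have "prefix (take i p @ s) (take i p @ (drop i p @ [True]))" using s e by metis
  then have "prefix s (drop i p @ [True])" by (simp only: same_prefix_prefix)
  then show "c \<in> (\<lambda>s. take i p @ s) ` {s. prefix s (drop i p @ [True])}" using s by blast
next
  fix c assume i: "i \<le> length p" and "c \<in> (\<lambda>s. take i p @ s) ` {s. prefix s (drop i p @ [True])}"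
  then obtain s where s: "c = take i p @ s" "prefix s (drop i p @ [True])" by blast
  then have "prefix c (take i p @ (drop i p @ [True]))" by simp
  then have "prefix c (p @ [True])" by (metis append_take_drop_id append.assoc)
  moreover have "prefix (take i p) c" using s by simp
  ultimately show "c \<in> CC p i" by (simp add: CC_def)
qed

lemma card_CC: "i \<le> length p \<Longrightarrow> finite (CC p i) \<and> card (CC p i) = length p - i + 2"
proof -
  assume i: "i \<le> length p"
  have f: "finite {s. prefix s (drop i p @ [True])}" using set_prefixes_eq[symmetric] by (metis List.finite_set)
  have cg: "card {s. prefix s xs} = Suc (length xs)" for xs::"bool list"
    using card_set_prefixes set_prefixes_eq by metis
  have c: "card {s. prefix s (drop i p @ [True])} = length p - i + 2"
    using cg[of "drop i p @ [True]"] i by simp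
  have "inj_on (\<lambda>s. take i p @ s) X" for X by (simp add: inj_on_def)
  then have "card (CC p i) = card {s. prefix s (drop i p @ [True])}" unfolding CC_eq[OF i] by (rule card_image)
  then show ?thesis using CC_eq[OF i] f c by simp
qed



lemma AA_step:
  fixes n p
  defines "I \<equiv> internal_nodes (lodgepole n)"
  defines "I' \<equiv> insert [] (insert [True] ((#) False ` I))"
  defines "S \<equiv> SIGMA i:{..length p}. CC p i \<times> AA n (drop i p @ [False])"
  defines "\<Psi> \<equiv> \<lambda>(i::nat, c::bool list, g::bool list \<Rightarrow> bool list). (\<lambda>k. if k \<in> I' then (if k = [] then take i p else if k = [True] then c else take i p @ g (tl k)) else undefined)"
  defines "\<Phi> \<equiv> \<lambda>h::bool list \<Rightarrow> bool list. (length (h []), h [True], restrict (\<lambda>k. drop (length (h [])) (h (False # k))) I)"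
  shows "bij_betw \<Psi> S (AA (Suc n) p)"
proof (rule bij_betw_byWitness[where f' = \<Phi>])
  have I'eq: "internal_nodes (lodgepole (Suc n)) = I'" unfolding I'_def I_def by (rule int_lodge_Suc)
  show "\<forall>a\<in>S. \<Phi> (\<Psi> a) = a"
  proof
    fix a assume "a \<in> S"
    then obtain i c g where a: "a = (i, c, g)" and i: "i \<le> length p" and c: "c \<in> CC p i"
      and g: "g \<in> AA n (drop i p @ [False])" unfolding S_def by auto
    have ge: "g \<in> extensional I" using g unfolding AA_def I_def PiE_def by auto
    have l: "length (take i p) = i" using i by simp
    have "restrict (\<lambda>k. drop i (\<Psi> a (False # k))) I = g"
    proof (rule ext)
      fix k show "restrict (\<lambda>k. drop i (\<Psi> a (False # k))) I k = g k"
        using ge l unfolding a \<Psi>_def I'_def by (auto simp: extensional_def)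
    qed
    then show "\<Phi> (\<Psi> a) = a" unfolding \<Phi>_def using l by (simp add: a \<Psi>_def I'_def)
  qed
  show "\<forall>h\<in>AA (Suc n) p. \<Psi> (\<Phi> h) = h"
  proof
    fix h assume h: "h \<in> AA (Suc n) p"
    then have hE: "h \<in> extensional I'" and hp: "\<forall>k\<in>I'. prefix (h k) (p @ k)"
      and hm: "\<forall>k1\<in>I'. \<forall>k2\<in>I'. prefix k1 k2 \<longrightarrow> prefix (h k1) (h k2)"
      unfolding AA_def I'eq PiE_def by auto
    have e0: "[] \<in> I'" unfolding I'_def by simp
    have h0: "prefix (h []) p" using hp e0 by auto
    then have t0: "take (length (h [])) p = h []" by (metis prefix_def append_eq_conv_conj)
    show "\<Psi> (\<Phi> h) = h"
    proof (rule ext)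
      fix k
      show "\<Psi> (\<Phi> h) k = h k"
      proof (cases "k \<in> I'")
        case False then show ?thesis using hE unfolding \<Psi>_def \<Phi>_def by (auto simp: extensional_def)
      next
        case True
        show ?thesis
        proof (cases "k = [] \<or> k = [True]")
          case True then show ?thesis using t0 \<open>k \<in> I'\<close> unfolding \<Psi>_def \<Phi>_def by auto
        next
          case False
          then obtain k' where k': "k = False # k'" "k' \<in> I" using \<open>k \<in> I'\<close> unfolding I'_def by auto
          have "prefix (h []) (h k)" using hm e0 \<open>k \<in> I'\<close> by auto
          then have "h [] @ drop (length (h [])) (h k) = h k" by (metis prefix_def append_eq_conv_conj)
          then show ?thesis using k' t0 \<open>k \<in> I'\<close> False unfolding \<Psi>_def \<Phi>_def by auto
        qed
      qed
    qed
  qed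
  show "\<Psi> ` S \<subseteq> AA (Suc n) p"
  proof
    fix h assume "h \<in> \<Psi> ` S"
    then obtain i c g where hd: "h = \<Psi> (i, c, g)" and i: "i \<le> length p" and c: "c \<in> CC p i"
      and g: "g \<in> AA n (drop i p @ [False])" unfolding S_def by auto
    have gp: "\<forall>k\<in>I. prefix (g k) ((drop i p @ [False]) @ k)"
      and gm: "\<forall>k1\<in>I. \<forall>k2\<in>I. prefix k1 k2 \<longrightarrow> prefix (g k1) (g k2)"
      using g unfolding AA_def I_def by auto
    have hv: "\<And>k. k \<in> I' \<Longrightarrow> h k = (if k = [] then take i p else if k = [True] then c else take i p @ g (tl k))"
      unfolding hd \<Psi>_def by simp
    have hE: "h \<in> I' \<rightarrow>\<^sub>E UNIV" unfolding hd \<Psi>_def by (auto simp: PiE_def extensional_def)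
    have c1: "prefix (take i p) c" and c2: "prefix c (p @ [True])" using c unfolding CC_def by auto
    have p1: "prefix (h k) (p @ k)" if k: "k \<in> I'" for k
    proof -
      consider "k = []" | "k = [True]" | k' where "k = False # k'" "k' \<in> I" using k unfolding I'_def by auto
      then show ?thesis
      proof cases
        case 1 then show ?thesis using hv k by (simp add: take_is_prefix)
      next
        case 2 then show ?thesis using hv k c2 by simp
      next
        case 3
        have "prefix (take i p @ g k') (take i p @ (drop i p @ [False]) @ k')" using gp 3 by simp
        moreover have "take i p @ (drop i p @ [False]) @ k' = p @ k" using 3 by simp
        moreover have "h k = take i p @ g k'" using hv[OF k] 3 by simp
        ultimately show ?thesis by metis
      qed
    qed
    have p2: "prefix (h k1) (h k2)" if k1: "k1 \<in> I'" and k2: "k2 \<in> I'" and pk: "prefix k1 k2" for k1 k2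
    proof -
      consider "k1 = []" | "k1 = [True]" | k' where "k1 = False # k'" "k' \<in> I" using k1 unfolding I'_def by auto
      then show ?thesis
      proof cases
        case 1
        consider "k2 = []" | "k2 = [True]" | k'' where "k2 = False # k''" "k'' \<in> I" using k2 unfolding I'_def by auto
        then show ?thesis
          by cases (use hv k1 k2 1 c1 in auto)
      next
        case 2
        then have "k2 = [True]" using pk k2 unfolding I'_def by (auto simp: prefix_Cons)
        then show ?thesis using 2 by simp
      next
        case 3
        then obtain k'' where k'': "k2 = False # k''" "k'' \<in> I" "prefix k' k''"
          using pk k2 unfolding I'_def by (auto simp: prefix_Cons)
        then have "prefix (g k') (g k'')" using gm 3 by auto
        then show ?thesis using hv k1 k2 3 k'' by simp
      qed
    qed
    show "h \<in> AA (Suc n) p" unfolding AA_def I'eq using hE p1 p2 by auto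
  qed
  show "\<Phi> ` AA (Suc n) p \<subseteq> S"
  proof
    fix x assume "x \<in> \<Phi> ` AA (Suc n) p"
    then obtain h where x: "x = \<Phi> h" and h: "h \<in> AA (Suc n) p" by auto
    then have hp: "\<forall>k\<in>I'. prefix (h k) (p @ k)"
      and hm: "\<forall>k1\<in>I'. \<forall>k2\<in>I'. prefix k1 k2 \<longrightarrow> prefix (h k1) (h k2)"
      unfolding AA_def I'eq PiE_def by auto
    have e0: "[] \<in> I'" and e1: "[True] \<in> I'" unfolding I'_def by simp_all
    define i where "i = length (h [])"
    have h0: "prefix (h []) p" using hp e0 by auto
    then have t0: "take i p = h []" unfolding i_def by (metis prefix_def append_eq_conv_conj)
    have il: "i \<le> length p" using h0 unfolding i_def by (simp add: prefix_length_le)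
    have cc: "h [True] \<in> CC p i" unfolding CC_def t0 using hp hm e0 e1 by auto
    define g where "g = restrict (\<lambda>k. drop i (h (False # k))) I"
    have gA: "g \<in> AA n (drop i p @ [False])"
      unfolding AA_def
    proof (intro CollectI conjI ballI impI)
      show "g \<in> internal_nodes (lodgepole n) \<rightarrow>\<^sub>E UNIV" unfolding g_def I_def by simp
    next
      fix k assume k: "k \<in> internal_nodes (lodgepole n)"
      then have "False # k \<in> I'" unfolding I'_def I_def by simp
      then have "prefix (drop i (h (False # k))) (drop i (p @ False # k))" using hp prefix_drop_mono by blast
      then show "prefix (g k) ((drop i p @ [False]) @ k)" using k il unfolding g_def I_def by simp
    next
      fix k1 k2 assume k1: "k1 \<in> internal_nodes (lodgepole n)" and k2: "k2 \<in> internal_nodes (lodgepole n)"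
        and pk: "prefix k1 k2"
      then have "False # k1 \<in> I'" "False # k2 \<in> I'" unfolding I'_def I_def by simp_all
      then have "prefix (h (False # k1)) (h (False # k2))" using hm pk by auto
      then show "prefix (g k1) (g k2)" using k1 k2 prefix_drop_mono unfolding g_def I_def by auto
    qed
    show "x \<in> S" unfolding x \<Phi>_def S_def using il cc gA by (simp add: i_def[symmetric] g_def[symmetric])
  qed
qed



lemma sum_rev_L: "(\<Sum>i\<le>(L::nat). f (L - i)) = (\<Sum>j\<le>L. (f j::nat))"
proof -
  have "(\<Sum>j\<in>{0..L}. f j) = (\<Sum>i\<in>{0..L}. f (L + 0 - i))" by (rule sum.atLeastAtMost_rev)
  then show ?thesis by (simp add: atMost_atLeast0)
qed

lemma AA_card: "finite (AA n p) \<and> card (AA n p) = HH n (length p)"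
proof (induction n arbitrary: p)
  case 0
  have "AA 0 p = {\<lambda>x. undefined}" unfolding AA_def by (simp add: PiE_empty_domain)
  then show ?case by simp
next
  case (Suc n)
  define S where "S = (SIGMA i:{..length p}. CC p i \<times> AA n (drop i p @ [False]))"
  obtain \<Psi> where b: "bij_betw \<Psi> S (AA (Suc n) p)" using AA_step unfolding S_def by blast
  have fin: "\<And>i. i \<in> {..length p} \<Longrightarrow> finite (CC p i \<times> AA n (drop i p @ [False]))"
    using card_CC Suc.IH by auto
  have fC: "\<And>i. i \<le> length p \<Longrightarrow> finite (CC p i)" using card_CC by blast
  have fA: "\<And>q. finite (AA n q)" using Suc.IH by blast
  have fS: "finite S" unfolding S_def using fC fA by (intro finite_SigmaI) simp_all
  have "card S = (\<Sum>i\<le>length p. card (CC p i \<times> AA n (drop i p @ [False])))"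
    unfolding S_def using fin by (intro card_SigmaI) auto
  also have "\<dots> = (\<Sum>i\<le>length p. (length p - i + 2) * HH n (length p - i + 1))"
  proof (rule sum.cong)
    fix i assume "i \<in> {..length p}"
    then have i: "i \<le> length p" by simp
    have "length (drop i p @ [False]) = length p - i + 1" using i by simp
    then show "card (CC p i \<times> AA n (drop i p @ [False])) = (length p - i + 2) * HH n (length p - i + 1)"
      using card_CC[OF i] Suc.IH[of "drop i p @ [False]"] by (simp add: card_cartesian_product)
  qed simp
  also have "\<dots> = (\<Sum>j\<le>length p. (j + 2) * HH n (j + 1))"
    using sum_rev_L[of "\<lambda>j. (j + 2) * HH n (j + 1)" "length p"] by simp
  also have "\<dots> = HH (Suc n) (length p)" by simp
  finally have "card S = HH (Suc n) (length p)" .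
  moreover have "card S = card (AA (Suc n) p)" using bij_betw_same_card[OF b] .
  moreover have "finite (AA (Suc n) p)" using bij_betw_finite[OF b] fS by simp
  ultimately show ?case by simp
qed

lemma hcount_HH: "hcount n = HH n 0"
proof (cases "n = 0")
  case True then show ?thesis by (simp add: hcount_def)
next
  case False
  have "matching_histories (lodgepole n) = AA n []" unfolding mh_char AA_def by simp
  then show ?thesis using False AA_card[of n "[]"] by (simp add: hcount_def)
qed



lemma ln_lower: assumes x: "(0::real) \<le> x" shows "2*x/(2+x) \<le> ln (1+x)"
proof -
  let ?f = "\<lambda>y::real. ln (1+y) - 2*y/(2+y)"
  have "?f 0 \<le> ?f x"
  proof (rule DERIV_nonneg_imp_nondecreasing[OF x])
    fix y :: real assume y: "0 \<le> y" "y \<le> x"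
    have "(?f has_real_derivative (1/(1+y) - 4/(2+y)^2)) (at y)"
      by (insert y) (rule derivative_eq_intros refl | simp add: power2_eq_square)+
    moreover have "0 \<le> 1/(1+y) - 4/(2+y)^2"
    proof -
      have a: "0 < (2+y)^2" and b: "0 < 1+y" using y by auto
      have c: "4 * (1+y) \<le> 1 * (2+y)^2" using y by (simp add: power2_eq_square algebra_simps)
      have "4/(2+y)^2 \<le> 1/(1+y)" using a b c by (simp add: field_simps)
      then show ?thesis by simp
    qed
    ultimately show "\<exists>d. (?f has_real_derivative d) (at y) \<and> 0 \<le> d" by blast
  qed
  then show ?thesis by simp
qed

lemma ln_upper: assumes x: "(0::real) \<le> x" shows "ln (1+x) \<le> x - x^2/2 + x^3/3"
proof -
  let ?f = "\<lambda>y::real. y - y^2/2 + y^3/3 - ln (1+y)"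
  have "?f 0 \<le> ?f x"
  proof (rule DERIV_nonneg_imp_nondecreasing[OF x])
    fix y :: real assume y: "0 \<le> y" "y \<le> x"
    have "(?f has_real_derivative (1 - y + y^2 - 1/(1+y))) (at y)"
      by (insert y) (rule derivative_eq_intros refl | simp)+
    moreover have "0 \<le> 1 - y + y^2 - 1/(1+y)"
    proof -
      have "1 - y + y^2 - 1/(1+y) = y^3 / (1+y)" using y by (simp add: field_simps power2_eq_square power3_eq_cube)
      then show ?thesis using y by simp
    qed
    ultimately show "\<exists>d. (?f has_real_derivative d) (at y) \<and> 0 \<le> d" by blast
  qed
  then show ?thesis by simp
qed



definition sd :: "nat \<Rightarrow> real" where
  "sd m = ln (fact m) - (real m + 1/2) * ln (real m) + real m"

lemma sd_diff: assumes m: "m \<ge> 1"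
  shows "sd m - sd (Suc m) = (real m + 1/2) * ln (1 + 1/real m) - 1"
proof -
  have m0: "real m > 0" using m by simp
  have f: "ln (fact (Suc m) :: real) = ln (real (Suc m)) + ln (fact m)"
    by (simp add: ln_mult fact_gt_zero)
  have e: "1 + 1/real m = (real m + 1)/real m" using m0 by (simp add: field_simps)
  have l: "ln (1 + 1/real m) = ln (real m + 1) - ln (real m)"
    unfolding e using m0 by (simp add: ln_div)
  show ?thesis unfolding sd_def f l by (simp add: algebra_simps)
qed

lemma sd_diff_bounds: assumes m: "m \<ge> 1"
  shows "0 \<le> sd m - sd (Suc m)" "sd m - sd (Suc m) \<le> 1/(2*real m) - 1/(2*(real m + 1))"
proof -
  define x where "x = 1 / real m"
  have m0: "real m > 0" using m by simp
  have x0: "x > 0" using m0 unfolding x_def by simp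
  have lo: "2*x/(2+x) \<le> ln (1+x)" using ln_lower x0 by simp
  have up: "ln (1+x) \<le> x - x^2/2 + x^3/3" using ln_upper x0 by simp
  have "(real m + 1/2) * (2*x/(2+x)) = 1" unfolding x_def using m0 by (simp add: field_simps)
  moreover have "(real m + 1/2) * (2*x/(2+x)) \<le> (real m + 1/2) * ln (1+x)" using lo m0 by (intro mult_left_mono) auto
  ultimately have "1 \<le> (real m + 1/2) * ln (1+x)" by linarith
  then show "0 \<le> sd m - sd (Suc m)" using sd_diff[OF m] unfolding x_def by simp
  have "(real m + 1/2) * ln (1+x) \<le> (real m + 1/2) * (x - x^2/2 + x^3/3)"
    using up m0 by (intro mult_left_mono) auto
  also have "\<dots> = 1 + 1/(12 * real m ^ 2) + 1/(6 * real m ^ 3)"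
    unfolding x_def using m0 by (simp add: field_simps power2_eq_square power3_eq_cube)
  also have "\<dots> \<le> 1 + 1/(2*real m) - 1/(2*(real m + 1))"
  proof -
    have "1/(12 * real m ^ 2) + 1/(6 * real m ^ 3) = (real m + 2) / (12 * real m ^ 3)"
      using m0 by (simp add: field_simps power2_eq_square power3_eq_cube)
    also have "\<dots> \<le> 1 / (2 * real m * (real m + 1))"
    proof -
      have "(real m + 2) * (2 * real m * (real m + 1)) \<le> 1 * (12 * real m ^ 3)"
      proof -
        have "real m \<ge> 1" using m by simp
        then have "0 \<le> (5 * real m + 2) * (real m - 1) * real m" by simp
        then show ?thesis by (simp add: algebra_simps power2_eq_square power3_eq_cube)
      qed
      moreover define D where "D = 2 * real m * (real m + 1)"
      moreover define M where "M = 12 * real m ^ 3"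
      ultimately have ineq: "(real m + 2) * D \<le> M" by simp
      have D0: "0 < D" unfolding D_def using m0 by simp
      have M0: "0 < M" unfolding M_def using m0 by simp
      have "real m + 2 \<le> M / D" using ineq D0 by (simp add: le_divide_eq)
      then have "(real m + 2) / M \<le> (M / D) / M" using M0 by (intro divide_right_mono) auto
      also have "(M / D) / M = 1 / D" using M0 by simp
      finally show ?thesis unfolding D_def M_def .
    qed
    also have "\<dots> = 1/(2*real m) - 1/(2*(real m + 1))"
      using m0 by (simp add: field_simps)
    finally show ?thesis by simp
  qed
  finally show "sd m - sd (Suc m) \<le> 1/(2*real m) - 1/(2*(real m + 1))"
    using sd_diff[OF m] unfolding x_def by simp
qed

lemma sd_lower: "sd 1 - sd (Suc n) \<le> 1/2 - 1/(2*(real n + 1))"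
proof (induction n)
  case 0 then show ?case by simp
next
  case (Suc n)
  have "sd 1 - sd (Suc (Suc n)) = (sd 1 - sd (Suc n)) + (sd (Suc n) - sd (Suc (Suc n)))" by simp
  also have "\<dots> \<le> (1/2 - 1/(2*(real n + 1))) + (1/(2*real (Suc n)) - 1/(2*(real (Suc n) + 1)))"
    using Suc sd_diff_bounds(2)[of "Suc n"] by (intro add_mono) auto
  also have "\<dots> = 1/2 - 1/(2*(real (Suc n) + 1))" by simp
  finally show ?case .
qed

lemma sd_conv: "\<exists>L. (\<lambda>n. sd (Suc n)) \<longlonglongrightarrow> L"
proof -
  have dec: "decseq (\<lambda>n. sd (Suc n))"
    by (rule decseq_SucI) (use sd_diff_bounds(1) in force)
  have "\<forall>i. sd 1 - 1/2 \<le> sd (Suc i)"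
  proof
    fix i
    have "0 \<le> 1/(2*(real i + 1))" by simp
    then show "sd 1 - 1/2 \<le> sd (Suc i)" using sd_lower[of i] by linarith
  qed
  then obtain L where "(\<lambda>n. sd (Suc n)) \<longlonglongrightarrow> L" using decseq_convergent[OF dec] by blast
  then show ?thesis by blast
qed

lemma sd_double: "(\<lambda>n. sd (2*(n+1)) - sd (n+1)) \<longlonglongrightarrow> 0"
proof -
  obtain L where L: "(\<lambda>n. sd (Suc n)) \<longlonglongrightarrow> L" using sd_conv by blast
  have sm: "strict_mono (\<lambda>n::nat. 2*n+1)" by (rule strict_monoI) simp
  have "((\<lambda>n. sd (Suc n)) \<circ> (\<lambda>n. 2*n+1)) \<longlonglongrightarrow> L" using LIMSEQ_subseq_LIMSEQ[OF L sm] .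
  then have "(\<lambda>n. sd (2*(n+1))) \<longlonglongrightarrow> L" by (simp add: o_def)
  from tendsto_diff[OF this L] show ?thesis by simp
qed

lemma dfact_fact: "dfact (2*n+1) * (2^(n+1) * fact (n+1)) = (fact (2*(n+1)) :: nat)"
proof (induction n)
  case 0 then show ?case by simp
next
  case (Suc n)
  have d: "dfact (2*Suc n+1) = (2*n+3) * dfact (2*n+1)"
  proof -
    have "dfact (2*Suc n+1) = dfact (Suc (Suc (2*n+1)))" by simp
    also have "\<dots> = (2*n+3) * dfact (2*n+1)" by (simp only: dfact.simps) (simp add: algebra_simps)
    finally show ?thesis .
  qed
  have f1: "fact (2*(Suc n+1)) = (2*n+4) * ((2*n+3) * (fact (2*(n+1))::nat))"
  proof -
    have "2*(Suc n+1) = Suc (Suc (2*(n+1)))" by simp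
    then have "fact (2*(Suc n+1)) = Suc (Suc (2*(n+1))) * (Suc (2*(n+1)) * (fact (2*(n+1))::nat))"
      by (simp only: fact_Suc of_nat_id)
    moreover have "Suc (2*(n+1)) = 2*n+3" "Suc (2*n+3) = 2*n+4" by simp_all
    ultimately show ?thesis by (simp only:)
  qed
  have f2: "(2::nat)^(Suc n+1) * fact (Suc n+1) = (2*n+4) * (2^(n+1) * fact (n+1))"
    by (simp add: algebra_simps)
  have "dfact (2*Suc n+1) * (2^(Suc n+1) * fact (Suc n+1)) = (2*n+4) * ((2*n+3) * (dfact (2*n+1) * (2^(n+1) * fact (n+1))))"
    unfolding d f2 by (simp only: mult_ac)
  also have "\<dots> = fact (2*(Suc n+1))" unfolding Suc f1 ..
  finally show ?case .
qed

lemma dfact_real: "real (dfact (2*n+1)) = fact (2*(n+1)) / (2^(n+1) * fact (n+1))"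
proof -
  have "real (dfact (2*n+1) * (2^(n+1) * fact (n+1))) = real (fact (2*(n+1)) :: nat)"
    by (simp only: dfact_fact)
  then have "real (dfact (2*n+1)) * (2^(n+1) * fact (n+1)) = fact (2*(n+1))"
    by (simp only: of_nat_mult of_nat_power of_nat_fact of_nat_numeral)
  moreover have "(2::real)^(n+1) * fact (n+1) > 0" by (simp add: fact_gt_zero)
  ultimately show ?thesis by (simp add: field_simps)
qed

lemma ln_ratio: assumes m: "m \<ge> 1"
  shows "ln (fact (2*m) / (2^m * fact m)) - ln (sqrt 2 * (2 * real m / exp 1) ^ m) = sd (2*m) - sd m"
proof -
  have m0: "real m > 0" using m by simp
  have a: "ln (fact (2*m) / (2^m * fact m) :: real) = ln (fact (2*m)) - (real m * ln 2 + ln (fact m))"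
    by (simp add: ln_div ln_mult fact_gt_zero ln_realpow)
  have b: "ln (sqrt 2 * (2 * real m / exp 1) ^ m) = ln 2 / 2 + real m * (ln 2 + ln (real m) - 1)"
    using m0 by (simp add: ln_mult ln_div ln_realpow ln_sqrt)
  have c: "ln (real (2*m)) = ln 2 + ln (real m)" using m0 by (simp add: ln_mult)
  show ?thesis unfolding a b sd_def c by (simp add: algebra_simps)
qed

lemma dfact_asymp: "(\<lambda>n. real (dfact (2*n+1))) \<sim>[at_top] (\<lambda>n. sqrt 2 * (2 * (real n + 1) / exp 1) ^ (n+1))"
proof (rule asymp_equivI')
  have eq: "real (dfact (2*n+1)) / (sqrt 2 * (2 * (real n + 1) / exp 1) ^ (n+1)) = exp (sd (2*(n+1)) - sd (n+1))" for n
  proof -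
    let ?A = "fact (2*(n+1)) / (2^(n+1) * fact (n+1)) :: real"
    let ?B = "sqrt 2 * (2 * real (n+1) / exp 1) ^ (n+1)"
    have e1: "2 * (real n + 1) / exp 1 = 2 * real (n+1) / exp 1" by simp
    have A0: "?A > 0" by (simp add: fact_gt_zero)
    have B0: "?B > 0" by simp
    have "?A / ?B = exp (ln ?A - ln ?B)" using A0 B0 by (simp add: exp_diff)
    also have "\<dots> = exp (sd (2*(n+1)) - sd (n+1))" using ln_ratio[of "n+1"] by simp
    finally show ?thesis unfolding dfact_real e1 .
  qed
  have "(\<lambda>n. exp (sd (2*(n+1)) - sd (n+1))) \<longlonglongrightarrow> exp 0"
    by (rule tendsto_exp[OF sd_double])
  then show "((\<lambda>n. real (dfact (2*n+1)) / (sqrt 2 * (2 * (real n + 1) / exp 1) ^ (n+1))) \<longlongrightarrow> 1) at_top"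
    unfolding eq by simp
qed



definition dd :: "nat \<Rightarrow> nat" where "dd n = dfact (2*n+1)"

lemma oo_pos: "oo n > 0" by (induction n) auto

lemma dd_pos: "dd n > 0" using oo_pos dfact_oo by (simp add: dd_def)

lemma dd_Suc: "dd (Suc m) = (2*m+3) * dd m"
proof -
  have "dd (Suc m) = oo (Suc (Suc m))" using dfact_oo[of "Suc m"] by (simp add: dd_def)
  also have "\<dots> = (2*m+3) * oo (Suc m)" by (simp only: oo.simps) (simp add: algebra_simps)
  finally show ?thesis using dfact_oo[of m] by (simp add: dd_def)
qed

lemma rec_nat: "hcount n + (\<Sum>k<n. dd k * hcount (n-1-k)) = dd n"
proof -
  have a: "dd n = hcount n + (\<Sum>j<n. hcount j * dd (n-1-j))"
    using EE_decomp[of n 0] by (simp add: EE0 hcount_HH dd_def)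
  have "(\<Sum>j<n. hcount j * dd (n-1-j)) = (\<Sum>i<n. hcount (n - Suc i) * dd (n-1-(n - Suc i)))"
    by (rule sum.nat_diff_reindex[symmetric])
  also have "\<dots> = (\<Sum>k<n. dd k * hcount (n-1-k))"
    by (rule sum.cong) auto
  finally show ?thesis using a by simp
qed

lemma h_le: "hcount n \<le> dd n" using rec_nat[of n] by linarith

lemma dd0: "dd 0 = 1" by (simp add: dd_def)

definition SS :: "nat \<Rightarrow> nat" where "SS n = (\<Sum>k<Suc n. dd k * dd (n-k))"

lemma SS_Suc: "SS (Suc n) = dd (Suc n) + (n+3) * SS n"
proof -
  define T where "T = (\<Sum>k<Suc n. dd k * dd (Suc n - k))"
  have s1: "SS (Suc n) = T + dd (Suc n)" unfolding SS_def T_def by (simp add: dd0)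
  have tA: "T = (\<Sum>k<Suc n. (2*(n-k)+3) * (dd k * dd (n-k)))"
    unfolding T_def
  proof (rule sum.cong)
    fix k assume "k \<in> {..<Suc n}"
    then have "Suc n - k = Suc (n-k)" by auto
    then show "dd k * dd (Suc n - k) = (2*(n-k)+3) * (dd k * dd (n-k))" by (simp only: dd_Suc) simp
  qed simp
  have tB: "T = (\<Sum>k<Suc n. (2*k+3) * (dd k * dd (n-k)))"
  proof -
    have "T = (\<Sum>i<Suc n. (2*(n-(Suc n - Suc i))+3) * (dd (Suc n - Suc i) * dd (n-(Suc n - Suc i))))"
      unfolding tA by (rule sum.nat_diff_reindex[symmetric])
    also have "\<dots> = (\<Sum>k<Suc n. (2*k+3) * (dd k * dd (n-k)))"
      by (rule sum.cong) (auto simp: mult.commute)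
    finally show ?thesis .
  qed
  have "2 * T = T + T" by simp
  also have "\<dots> = (\<Sum>k<Suc n. (2*(n-k)+3) * (dd k * dd (n-k))) + (\<Sum>k<Suc n. (2*k+3) * (dd k * dd (n-k)))"
    by (simp only: tA[symmetric] tB[symmetric])
  also have "\<dots> = (\<Sum>k<Suc n. ((2*(n-k)+3) + (2*k+3)) * (dd k * dd (n-k)))"
    by (simp only: sum.distrib[symmetric] add_mult_distrib)
  also have "\<dots> = (\<Sum>k<Suc n. (2*n+6) * (dd k * dd (n-k)))"
    by (rule sum.cong) auto
  also have "\<dots> = (2*n+6) * SS n" unfolding SS_def by (simp only: sum_distrib_left)
  finally have t2: "2 * T = (2*n+6) * SS n" .
  have "(2*n+6) * SS n = 2 * ((n+3) * SS n)" by (simp add: algebra_simps)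
  then have "T = (n+3) * SS n" using t2 by linarith
  then show ?thesis using s1 by simp
qed

lemma dd_vals: "dd 0 = 1" "dd 1 = 3" "dd 2 = 15"
  using dd_Suc[of 0] dd_Suc[of 1] by (simp_all add: numeral_eq_Suc dd_def)

lemma SS_bound: "SS n \<le> 4 * dd n"
proof (cases "n \<ge> 2")
  case True
  then show ?thesis
  proof (induction n rule: nat_induct_at_least)
    case base
    have "SS 2 = 39" unfolding SS_def using dd_vals by (simp add: numeral_eq_Suc lessThan_Suc)
    then show ?case using dd_vals by simp
  next
    case (Suc n)
    have "SS (Suc n) \<le> dd (Suc n) + (n+3) * (4 * dd n)" unfolding SS_Suc using Suc by simp
    also have "\<dots> \<le> 4 * dd (Suc n)" unfolding dd_Suc using Suc by (simp add: algebra_simps)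
    finally show ?case .
  qed
next
  case False
  then have "n = 0 \<or> n = 1" by auto
  then show ?thesis unfolding SS_def using dd_vals by (auto simp: numeral_eq_Suc lessThan_Suc)
qed

lemma h_lower: assumes n: "n \<ge> 1"
  shows "real (dd n) * ((real n - 2) / real n) \<le> real (hcount n)"
proof -
  obtain m where m: "n = Suc m" using n by (cases n) auto
  have "(\<Sum>k<n. dd k * hcount (n-1-k)) \<le> (\<Sum>k<n. dd k * dd (n-1-k))"
    by (intro sum_mono mult_left_mono h_le) simp
  also have "\<dots> = SS m" unfolding SS_def m by simp
  also have "\<dots> \<le> 4 * dd m" by (rule SS_bound)
  finally have "dd n \<le> hcount n + 4 * dd m" using rec_nat[of n] by linarith
  then have a: "real (dd n) - 4 * real (dd m) \<le> real (hcount n)" by linarith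
  have dn: "real (dd n) = (2*real m+3) * real (dd m)" unfolding m dd_Suc by simp
  have e: "(real n - 2) / real n = (real m - 1) / (real m + 1)" using m by simp
  have "real (dd n) * ((real n - 2) / real n) = (2*real m+3) * real (dd m) * ((real m - 1) / (real m + 1))"
    unfolding dn e ..
  also have "\<dots> \<le> (2*real m+3) * real (dd m) - 4 * real (dd m)"
  proof -
    have "(2*real m+3) * ((real m - 1) / (real m + 1)) \<le> 2*real m - 1"
    proof -
      have "(2*real m+3) * (real m - 1) \<le> (2*real m - 1) * (real m + 1)" by (simp add: algebra_simps)
      then show ?thesis by (simp add: field_simps)
    qed
    then have "(2*real m+3) * ((real m - 1) / (real m + 1)) * real (dd m) \<le> (2*real m - 1) * real (dd m)"
      by (intro mult_right_mono) auto
    then show ?thesis by (simp add: algebra_simps)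
  qed
  also have "\<dots> = real (dd n) - 4 * real (dd m)" using dn by simp
  finally show ?thesis using a by linarith
qed

lemma h_asymp: "(\<lambda>n. real (hcount n)) \<sim>[at_top] (\<lambda>n. real (dd n))"
proof (rule asymp_equivI')
  have lim: "(\<lambda>n. (real n - 2) / real n) \<longlonglongrightarrow> 1"
  proof -
    have "(\<lambda>n. 1 - 2 / real n) \<longlonglongrightarrow> 1 - 0"
      by (intro tendsto_intros tendsto_divide_0[OF tendsto_const] filterlim_real_sequentially)
    moreover have "eventually (\<lambda>n. 1 - 2 / real n = (real n - 2) / real n) sequentially"
      using eventually_gt_at_top[of 0] by eventually_elim (simp add: field_simps)
    ultimately show ?thesis using Lim_transform_eventually by fastforce
  qed
  show "((\<lambda>n. real (hcount n) / real (dd n)) \<longlongrightarrow> 1) at_top"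
  proof (rule tendsto_sandwich[OF _ _ lim tendsto_const])
    show "eventually (\<lambda>n. (real n - 2) / real n \<le> real (hcount n) / real (dd n)) sequentially"
      using eventually_ge_at_top[of 1]
    proof eventually_elim
      case (elim n)
      have "0 < real (dd n)" using dd_pos by simp
      then show ?case using h_lower[OF elim] by (simp add: field_simps)
    qed
    show "eventually (\<lambda>n. real (hcount n) / real (dd n) \<le> 1) sequentially"
    proof (rule always_eventually, rule allI)
      fix n
      have "0 < real (dd n)" using dd_pos by simp
      then show "real (hcount n) / real (dd n) \<le> 1" using h_le[of n] by simp
    qed
  qed
qed

theorem proposition1:
  shows "(\<forall>n\<ge>1. int (hcount n) =
            int (dfact (2*n+1)) - (\<Sum>k<n. int (dfact (2*k+1)) * int (hcount (n-1-k))))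
       \<and> (\<forall>n\<ge>1. real (dfact (2*n+1)) * ((real n - 2) / real n) \<le> real (hcount n)
                 \<and> hcount n \<le> dfact (2*n+1))
       \<and> (\<lambda>n. real (hcount n)) \<sim>[at_top] (\<lambda>n. real (dfact (2*n+1)))
       \<and> (\<lambda>n. real (dfact (2*n+1))) \<sim>[at_top] (\<lambda>n. sqrt 2 * (2 * (real n + 1) / exp 1) ^ (n+1))"
  unfolding dd_def[symmetric]
proof (intro conjI allI impI)
  fix n :: nat
  have "int (hcount n) + int (\<Sum>k<n. dd k * hcount (n-1-k)) = int (dd n)"
    using rec_nat[of n] by (metis of_nat_add)
  then show "int (hcount n) = int (dd n) - (\<Sum>k<n. int (dd k) * int (hcount (n-1-k)))"
    by (simp add: of_nat_sum)
next
  fix n :: nat assume "n \<ge> 1"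
  then show "real (dd n) * ((real n - 2) / real n) \<le> real (hcount n)" by (rule h_lower)
next
  fix n :: nat
  show "hcount n \<le> dd n" by (rule h_le)
next
  show "(\<lambda>n. real (hcount n)) \<sim>[at_top] (\<lambda>n. real (dd n))" by (rule h_asymp)
next
  show "(\<lambda>n. real (dd n)) \<sim>[at_top] (\<lambda>n. sqrt 2 * (2 * (real n + 1) / exp 1) ^ (n+1))"
    unfolding dd_def by (rule dfact_asymp)
qed

end
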